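(* Let $K\subseteq\mathbb{R}^n$ be a compact convex set and $P=\{\mathbf{x}\in\mathbb{R}^n:\mathsf{A}\mathbf{x}\le\mathbf{b}\}$, $\mathsf{A}\in\mathbb{R}^{m\times n}$, $\mathbf{b}\in\mathbb{R}^m$, with $P\cap K=\emptyset$. For $\boldsymbol\varepsilon\in\mathbb{R}^m$ let $P_{\boldsymbol\varepsilon}:=\{\mathbf{x}\in\mathbb{R}^n:\mathsf{A}\mathbf{x}\le\mathbf{b}+\boldsymbol\varepsilon\}$. Then for every $\boldsymbol\varepsilon\in\mathbb{R}^m$, either $K\cap P_{\boldsymbol\varepsilon}=\emptyset$, or there exists $j\in[m]$ with $\varepsilon_j>0$ and $K\cap P_{\boldsymbol\varepsilon-(n+1)\varepsilon_j\mathbf{e}_j}=\emptyset$.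
   Context: $\mathbf{e}_j$ denotes the $j$-th standard basis vector of $\mathbb{R}^m$. *)

theory Defs
  imports "HOL-Analysis.Analysis"
begin

definition polyh :: "real^'n^'m \<Rightarrow> real^'m \<Rightarrow> (real^'n) set" where
  "polyh A b = {x. \<forall>i. (A *v x) $ i \<le> b $ i}"

end

theory Submission
  imports Defs
begin

lemma helly_idx:
  fixes C :: "'i \<Rightarrow> 'a::euclidean_space set"
  assumes fin: "finite I" and ne: "I \<noteq> {}" and cv: "\<forall>i\<in>I. convex (C i)"
    and sub: "\<And>S. S \<subseteq> I \<Longrightarrow> S \<noteq> {} \<Longrightarrow> card S \<le> DIM('a) + 1 \<Longrightarrow> (\<Inter>i\<in>S. C i) \<noteq> {}"
  shows "(\<Inter>i\<in>I. C i) \<noteq> {}"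
proof -
  have key: "\<Inter>t \<noteq> {}" if t: "t \<subseteq> C ` I" "t \<noteq> {}" "card t \<le> DIM('a) + 1" for t
  proof -
    define S where "S = inv_into I C ` t"
    have ft: "finite t" using t(1) fin finite_surj by blast
    have CS: "C ` S = t" unfolding S_def using image_inv_into_cancel[OF refl t(1)] by simp
    have SI: "S \<subseteq> I" unfolding S_def using t(1) by (auto intro: inv_into_into)
    have "card S \<le> card t" unfolding S_def using ft card_image_le by blast
    moreover have "S \<noteq> {}" using CS t(2) by auto
    ultimately have "(\<Inter>i\<in>S. C i) \<noteq> {}" using sub SI t(3) by simp
    thus ?thesis using CS by simp
  qed
  show ?thesis
  proof (cases "card (C ` I) \<ge> DIM('a) + 1")
    case True
    have "\<Inter>(C ` I) \<noteq> {}"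
    proof (rule Helly[OF True])
      show "\<forall>s\<in>C ` I. convex s" using cv by auto
      fix t assume "t \<subseteq> C ` I" "card t = DIM('a) + 1"
      thus "\<Inter>t \<noteq> {}" by (intro key) auto
    qed
    thus ?thesis by simp
  next
    case False
    have "\<Inter>(C ` I) \<noteq> {}" by (rule key) (use False ne in auto)
    thus ?thesis by simp
  qed
qed

lemma row_conv:
  fixes A :: "real^'n^'m"
  shows "convex {x. (A *v x) $ i \<le> c}"
  unfolding convex_def
proof (intro allI impI ballI, clarsimp)
  fix x y :: "real^'n" and u v :: real
  assume h: "(A *v x) $ i \<le> c" "(A *v y) $ i \<le> c" "0 \<le> u" "0 \<le> v" "u + v = 1"
  have "(A *v (u *\<^sub>R x + v *\<^sub>R y)) $ i = u * (A *v x) $ i + v * (A *v y) $ i"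
    by (simp add: matrix_vector_right_distrib matrix_vector_mult_scaleR)
  also have "\<dots> \<le> u * c + v * c" using h by (intro add_mono mult_left_mono) auto
  also have "\<dots> = c" using h(5) by (simp add: distrib_right[symmetric])
  finally show "(A *v (u *\<^sub>R x + v *\<^sub>R y)) $ i \<le> c" .
qed

theorem lemma2p3:
  fixes K :: "(real^'n) set" and A :: "real^'n^'m" and b :: "real^'m"
  assumes "compact K" and "convex K"
    and "polyh A b \<inter> K = {}"
  shows "\<forall>\<epsilon>::real^'m. K \<inter> polyh A (b + \<epsilon>) = {} \<or>
           (\<exists>j. \<epsilon> $ j > 0 \<and>
              K \<inter> polyh A (b + \<epsilon> - ((real CARD('n) + 1) * \<epsilon> $ j) *\<^sub>R (axis j 1 :: real^'m)) = {})"
proof (rule allI, rule ccontr)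
  fix \<epsilon> :: "real^'m"
  let ?N = "real CARD('n)"
  assume "\<not> (K \<inter> polyh A (b + \<epsilon>) = {} \<or>
           (\<exists>j. \<epsilon> $ j > 0 \<and>
              K \<inter> polyh A (b + \<epsilon> - ((real CARD('n) + 1) * \<epsilon> $ j) *\<^sub>R (axis j 1 :: real^'m)) = {}))"
  then obtain x0 where x0: "x0 \<in> K" "x0 \<in> polyh A (b + \<epsilon>)"
    and nj: "\<And>j. \<epsilon> $ j > 0 \<Longrightarrow> \<exists>x. x \<in> K \<and> x \<in> polyh A (b + \<epsilon> - ((?N + 1) * \<epsilon> $ j) *\<^sub>R (axis j 1 :: real^'m))"
    by blast
  obtain X where X: "\<And>j. \<epsilon> $ j > 0 \<Longrightarrow> X j \<in> K \<and> X j \<in> polyh A (b + \<epsilon> - ((?N + 1) * \<epsilon> $ j) *\<^sub>R (axis j 1 :: real^'m))"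
    using nj by metis
  have Xrow: "(A *v X k) $ i \<le> b $ i + \<epsilon> $ i - (if i = k then (?N + 1) * \<epsilon> $ k else 0)"
    if "\<epsilon> $ k > 0" for k i
  proof -
    have "(A *v X k) $ i \<le> b $ i + \<epsilon> $ i - (?N + 1) * \<epsilon> $ k * (if i = k then 1 else 0)"
      using X[OF that] by (auto simp: polyh_def axis_def)
    thus ?thesis by (cases "i = k") auto
  qed
  define J where "J = {j. \<epsilon> $ j > 0}"
  show False
  proof (cases "J = {}")
    case True
    have "x0 \<in> polyh A b"
    proof -
      { fix i
        have "(A *v x0) $ i \<le> b $ i + \<epsilon> $ i" using x0(2) by (auto simp: polyh_def)
        moreover have "\<epsilon> $ i \<le> 0" using True unfolding J_def by (auto simp: not_less)
        ultimately have "(A *v x0) $ i \<le> b $ i" by simp }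
      thus ?thesis by (simp add: polyh_def)
    qed
    thus False using assms(3) x0(1) by blast
  next
    case False
    define C where "C j = K \<inter> {x. (A *v x) $ j \<le> b $ j} \<inter>
        (\<Inter>i\<in>{i. \<epsilon> $ i \<le> 0}. {x. (A *v x) $ i \<le> b $ i + \<epsilon> $ i})" for j
    have "(\<Inter>j\<in>J. C j) \<noteq> {}"
    proof (rule helly_idx)
      show "finite J" by simp
      show "J \<noteq> {}" by fact
      show "\<forall>i\<in>J. convex (C i)" unfolding C_def
        using assms(2) by (intro ballI convex_Int convex_INT row_conv) auto
      fix S assume S: "S \<subseteq> J" "S \<noteq> {}" "card S \<le> DIM(real^'n) + 1"
      have fS: "finite S" by simp
      define c where "c = real (card S)"
      have cpos: "c > 0" unfolding c_def using S fS by (simp add: card_gt_0_iff)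
      have cle: "c \<le> ?N + 1" using S(3) unfolding c_def by simp
      have eS: "\<epsilon> $ k > 0" if "k \<in> S" for k using S(1) that unfolding J_def by auto
      define y where "y = (\<Sum>k\<in>S. (1 / c) *\<^sub>R X k)"
      have yK: "y \<in> K" unfolding y_def
        by (rule convex_sum[OF fS assms(2)]) (use cpos eS X in \<open>auto simp: c_def\<close>)
      have Ay: "(A *v y) $ i = (1 / c) * (\<Sum>k\<in>S. (A *v X k) $ i)" for i
        unfolding y_def by (simp add: vec.sum matrix_vector_mult_scaleR sum_distrib_left)
      have "y \<in> C j" if jS: "j \<in> S" for j
      proof -
        have r1: "(A *v y) $ j \<le> b $ j"
        proof -
          have "(\<Sum>k\<in>S. (A *v X k) $ j) = (A *v X j) $ j + (\<Sum>k\<in>S - {j}. (A *v X k) $ j)"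
            using jS fS by (simp add: sum.remove)
          also have "\<dots> \<le> (b $ j + \<epsilon> $ j - (?N + 1) * \<epsilon> $ j) + (\<Sum>k\<in>S - {j}. b $ j + \<epsilon> $ j)"
            apply (rule add_mono)
            using Xrow[OF eS[OF jS], of j] apply simp
            apply (rule sum_mono)
            subgoal for k using Xrow[OF eS, of k j] by auto
            done
          also have "\<dots> = c * b $ j + \<epsilon> $ j * (c - 1 - ?N)"
            using jS fS \<open>c > 0\<close> by (simp add: c_def card_Diff_singleton of_nat_diff card_gt_0_iff algebra_simps Suc_leI)
          also have "\<dots> \<le> c * b $ j"
            using cle eS[OF jS] by (simp add: mult_nonneg_nonpos)
          finally have "(\<Sum>k\<in>S. (A *v X k) $ j) \<le> c * b $ j" .
          thus ?thesis using cpos by (simp add: Ay field_simps)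
        qed
        have r2: "(A *v y) $ i \<le> b $ i + \<epsilon> $ i" if ei: "\<epsilon> $ i \<le> 0" for i
        proof -
          have "(\<Sum>k\<in>S. (A *v X k) $ i) \<le> (\<Sum>k\<in>S. b $ i + \<epsilon> $ i)"
            apply (rule sum_mono)
            subgoal for k using Xrow[OF eS, of k i] ei eS[of k] by (auto split: if_splits)
            done
          also have "\<dots> = c * (b $ i + \<epsilon> $ i)" by (simp add: c_def)
          finally show ?thesis using cpos by (simp add: Ay field_simps)
        qed
        show ?thesis unfolding C_def using yK r1 r2 by auto
      qed
      thus "(\<Inter>j\<in>S. C j) \<noteq> {}" by blast
    qed
    then obtain z where z: "\<And>j. j \<in> J \<Longrightarrow> z \<in> C j" by blast
    obtain j0 where j0: "j0 \<in> J" using False by blast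
    have "z \<in> K" using z[OF j0] unfolding C_def by auto
    moreover have "z \<in> polyh A b"
    proof -
      { fix i
        have "(A *v z) $ i \<le> b $ i"
        proof (cases "i \<in> J")
          case True thus ?thesis using z[OF True] unfolding C_def by auto
        next
          case False
          hence "\<epsilon> $ i \<le> 0" unfolding J_def by auto
          thus ?thesis using z[OF j0] unfolding C_def by auto
        qed }
      thus ?thesis by (simp add: polyh_def)
    qed
    ultimately show False using assms(3) by blast
  qed
qed

end
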